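(* For real $c$, $x\ge 0$ and $y\ge 1$, let $\Phi_y(x)=(y+1)\,y^c+x^c-(y+1)\,x$. Then: (a) if $1<c<\frac{1+\sqrt5}{2}$, there exist $x\ge 2$ and $y$ with $1\le y\le x$ such that $\Phi_y(x)<0$; (b) if $c=\frac{1+\sqrt5}{2}$, then $\Phi_y(x)\ge 0$ for all $x\ge 0$ and all $y\ge 1$. *)

theory Defs
  imports Complex_Main
begin

definition Phi :: "real \<Rightarrow> real \<Rightarrow> real \<Rightarrow> real" where
  "Phi c y x = (y + 1) * y powr c + x powr c - (y + 1) * x"

end

theory Submission
  imports Defs "HOL-Analysis.Analysis"
begin

lemma partB:
  fixes x y :: real
  assumes x: "x \<ge> 0" and y: "y \<ge> 1"
  shows "Phi ((1 + sqrt 5) / 2) y x \<ge> 0"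
proof -
  define c :: real where "c = (1 + sqrt 5) / 2"
  have s5: "sqrt 5 * sqrt 5 = 5" by simp
  have s5b: "sqrt 5 > 2" by (simp add: real_less_rsqrt)
  have s5c: "sqrt 5 < 3" by (rule real_less_lsqrt) auto
  have cc: "c * c = c + 1" unfolding c_def using s5 by (simp add: field_simps)
  have c1: "c > 1" and c2: "c \<le> 2" using s5b s5c unfolding c_def by auto
  have cc2: "c * (c + 1) = 2 * c + 1" using cc by (simp add: algebra_simps)
  have hq: "1 / c + 1 / (c + 1) = 1" using cc2 c1
    by (simp add: field_simps)
  define A where "A = (y + 1) / c"
  have A0: "A \<ge> 0" using y c1 unfolding A_def by simp
  have Y: "x * A \<le> x powr c / c + A powr (c+1) / (c+1)"
    using Youngs_inequality[of c "c+1" x A] c1 hq x A0 by simp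
  have e1: "(y+1) * x = c * (x * A)" using c1 unfolding A_def by simp
  have e2: "A powr (c+1) = A powr c * A" using A0 c1
    by (cases "A = 0") (simp_all add: powr_add)
  have e3: "c * (A powr (c+1) / (c+1)) = (y+1) * (A powr c / c^2)"
    using e2 c1 cc unfolding A_def by (simp add: field_simps power2_eq_square)
  have "A powr c = (y+1) powr c / c powr c" unfolding A_def using y c1 by (simp add: powr_divide)
  also have "\<dots> \<le> (2*y) powr c / c powr c"
    using y c1 by (intro divide_right_mono powr_mono2) auto
  also have "\<dots> = (2/c) powr c * y powr c"
    using y c1 by (simp add: powr_mult powr_divide)
  also have "\<dots> \<le> c powr c * y powr c"
  proof -
    have "2 / c \<le> c" using cc c1 by (simp add: field_simps)
    then have "(2/c) powr c \<le> c powr c" using c1 by (intro powr_mono2) auto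
    then show ?thesis by (simp add: mult_right_mono)
  qed
  also have "\<dots> \<le> c powr 2 * y powr c"
    using c1 c2 by (intro mult_right_mono powr_mono) auto
  finally have "A powr c \<le> c^2 * y powr c" using c1 by simp
  then have "A powr c / c^2 \<le> y powr c" using c1 by (simp add: field_simps)
  then have "(y+1) * (A powr c / c^2) \<le> (y+1) * y powr c" using y by (intro mult_left_mono) auto
  moreover have "(y+1) * x \<le> x powr c + c * (A powr (c+1) / (c+1))"
  proof -
    have "c * (x * A) \<le> c * (x powr c / c + A powr (c+1) / (c+1))"
      using Y c1 by (intro mult_left_mono) auto
    also have "\<dots> = x powr c + c * (A powr (c+1) / (c+1))"
      using c1 by (simp add: distrib_left)
    finally show ?thesis using e1 by (simp only:)
  qed
  ultimately show ?thesis unfolding Phi_def c_def[symmetric] using e3 by linarith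
qed

lemma partA:
  fixes c :: real
  assumes c1: "1 < c" and cphi: "c < (1 + sqrt 5) / 2"
  shows "\<exists>x y::real. x \<ge> 2 \<and> 1 \<le> y \<and> y \<le> x \<and> Phi c y x < 0"
proof -
  have s5: "sqrt 5 * sqrt 5 = 5" by simp
  have ccl: "c * (c - 1) < 1"
  proof -
    have "c * c - c - 1 = (c - (1 + sqrt 5)/2) * (c - (1 - sqrt 5)/2)"
      using s5 by (simp add: field_simps)
    moreover have "(1 - sqrt 5)/2 < 0" by (simp add: real_less_rsqrt)
    ultimately have "c * c - c - 1 < 0" using cphi c1
      by (simp add: mult_neg_pos)
    then show ?thesis by (simp add: algebra_simps)
  qed
  define e where "e = 1 / (c - 1)"
  have ec: "e > c" using ccl c1 unfolding e_def by (simp add: field_simps)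
  have ec1: "e * c = e + 1" using c1 unfolding e_def by (simp add: field_simps)
  define K where "K = c powr (c+1) / (c - 1)"
  define s where "s = max 2 ((K+1) powr (1/(e-c)))"
  have K0: "K > 0" using c1 unfolding K_def by simp
  have s2: "s \<ge> 2" unfolding s_def by simp
  have sK: "s powr (e - c) \<ge> K + 1"
  proof -
    have "s powr (e-c) \<ge> ((K+1) powr (1/(e-c))) powr (e-c)"
      unfolding s_def using ec K0 by (intro powr_mono2) auto
    also have "((K+1) powr (1/(e-c))) powr (e-c) = K + 1"
      using ec K0 by (simp add: powr_powr)
    finally show ?thesis .
  qed
  define y where "y = c * s - 1"
  define x where "x = s powr e"
  have "s \<le> c * s" using c1 s2 by (simp add: mult_right_mono)
  then have y1: "y \<ge> 1" unfolding y_def using s2 by linarith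
  have x_ge_s: "x \<ge> s"
  proof -
    have "s powr 1 \<le> s powr e" using s2 ec c1 by (intro powr_mono) auto
    then show ?thesis unfolding x_def using s2 by simp
  qed
  have x2: "x \<ge> 2" using x_ge_s s2 by simp
  have xc: "x powr c = s * x" unfolding x_def using s2
    by (simp add: powr_powr ec1 powr_add)
  have yx: "(y+1) * x = c * s * x" unfolding y_def by simp
  have "y powr c < (c * s) powr c"
    unfolding y_def using y1 c1 unfolding y_def by (intro powr_less_mono2) auto
  also have "\<dots> = c powr c * s powr c" using c1 s2 by (simp add: powr_mult)
  finally have yc: "c * y powr c < c * (c powr c * s powr c)" using c1 by simp
  have "c * (c powr c * s powr c) = K * (c - 1) * s powr c"
    unfolding K_def using c1 by (simp add: powr_add field_simps)
  also have "\<dots> < (K+1) * (c-1) * s powr c" using c1 s2 by simp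
  also have "\<dots> \<le> s powr (e-c) * (c-1) * s powr c" using sK c1 s2
    by (intro mult_right_mono) auto
  also have "\<dots> = (c-1) * x" unfolding x_def using s2
    by (simp add: powr_add[symmetric])
  finally have key: "c * y powr c < (c-1) * x" using yc by linarith
  have "y powr 1 \<le> y powr c" using y1 c1 by (intro powr_mono) auto
  then have yy: "y \<le> y powr c" using y1 by simp
  have yc2: "y powr c \<le> c * y powr c" using c1 y1 by (simp add: mult_right_mono)
  have "sqrt 5 < 3" by (rule real_less_lsqrt) auto
  then have "c - 1 \<le> 1" using cphi by simp
  moreover have "(c-1) * x \<le> x" using c1 x2 \<open>c - 1 \<le> 1\<close> by (simp add: mult_right_mono)
  ultimately have yx2: "y \<le> x" using key yy yc2 by linarith
  have "Phi c y x = s * (c * y powr c - (c-1) * x)"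
    unfolding Phi_def using xc yx unfolding y_def by (simp add: algebra_simps)
  also have "\<dots> < 0" using key s2 by (simp add: mult_pos_neg)
  finally show ?thesis using x2 y1 yx2 by blast
qed

theorem mainTheorem2:
  shows "(\<forall>c::real. 1 < c \<and> c < (1 + sqrt 5) / 2 \<longrightarrow>
            (\<exists>x y::real. x \<ge> 2 \<and> 1 \<le> y \<and> y \<le> x \<and> Phi c y x < 0))
       \<and> (\<forall>x y::real. x \<ge> 0 \<longrightarrow> y \<ge> 1 \<longrightarrow> Phi ((1 + sqrt 5) / 2) y x \<ge> 0)"
  using partA partB by blast

end
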